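(* Let $H=\sum_{i=1}^d \epsilon_i |e_i\rangle\langle e_i|$ be the Hamiltonian of a $d$-dimensional quantum system and let $\rho=\sum_{i=1}^d p_i|e_i\rangle\langle e_i|$ be a full-rank state, with $\epsilon$-$s$ ensemble $\mathcal V(\rho)=\{\boldsymbol v_i=(\epsilon_i,-\log p_i):1\le i\le d\}$. For an integer $k\ge1$ let $$\mathcal V_k(\rho)=\Big\{\tfrac1k\sum_{i=1}^d c_i\boldsymbol v_i \;:\; c_i\in\mathbb{N}\cup\{0\},\ \sum_{i=1}^d c_i=k\Big\}.$$ Then $\rho$ is $k$-passive if and only if $[\rho,H]=0$ and $\mathcal V_k(\rho)$ is a totally ordered subset of $\mathbb{R}^2$.
   Context: A state $\sigma$ of a system with Hamiltonian $K$ is passive if $\mathrm{tr}(KU\sigma U^\dagger)\ge\mathrm{tr}(K\sigma)$ for all unitaries $U$. A state $\rho$ with Hamiltonian $H$ is $k$-passive if $\rho^{\otimes k}$ is passive with respect to the Hamiltonian $\sum_{i=1}^k H_i$ on $k$ copies, where $H_i$ is $H$ acting on the $i$-th copy. In $\mathbb{R}^2$, $(x_i,y_i)\le(x_j,y_j)$ means $x_i\le x_j$ and $y_i\le y_j$; a set is totally ordered if any two of its elements are comparable under $\le$. Note $\mathcal V_k(\rho)=\frac1k\mathcal V(\rho^{\otimes k})$, the $\epsilon$-$s$ ensemble of $k$ copies divided by $k$. *)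

theory Defs
  imports "HOL-Analysis.Analysis"
begin

text \<open>Square complex matrices of dimension n are represented as functions
  nat \<Rightarrow> nat \<Rightarrow> complex; only entries with indices below n matter.\<close>

type_synonym cmat = "nat \<Rightarrow> nat \<Rightarrow> complex"

definition mmul :: "nat \<Rightarrow> cmat \<Rightarrow> cmat \<Rightarrow> cmat" where
  "mmul n A B = (\<lambda>i j. \<Sum>l<n. A i l * B l j)"

definition madd :: "cmat \<Rightarrow> cmat \<Rightarrow> cmat" where
  "madd A B = (\<lambda>i j. A i j + B i j)"

definition mzero :: cmat where
  "mzero = (\<lambda>i j. 0)"

definition mid :: cmat where
  "mid = (\<lambda>i j. if i = j then 1 else 0)"

definition adj :: "cmat \<Rightarrow> cmat" where
  "adj A = (\<lambda>i j. cnj (A j i))"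

definition mtrace :: "nat \<Rightarrow> cmat \<Rightarrow> complex" where
  "mtrace n A = (\<Sum>i<n. A i i)"

definition unitary :: "nat \<Rightarrow> cmat \<Rightarrow> bool" where
  "unitary n U \<longleftrightarrow> (\<forall>i<n. \<forall>j<n. mmul n U (adj U) i j = mid i j \<and> mmul n (adj U) U i j = mid i j)"

definition diag_mat :: "(nat \<Rightarrow> real) \<Rightarrow> cmat" where
  "diag_mat f = (\<lambda>i j. if i = j then complex_of_real (f i) else 0)"

text \<open>Passivity of state sigma w.r.t. Hamiltonian K on an n-dimensional space:
  tr(K U sigma U^dagger) \<ge> tr(K sigma) for all unitaries U (traces are real here,
  we compare real parts).\<close>
definition is_passive :: "nat \<Rightarrow> cmat \<Rightarrow> cmat \<Rightarrow> bool" where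
  "is_passive n K \<sigma> \<longleftrightarrow> (\<forall>U. unitary n U \<longrightarrow>
     Re (mtrace n (mmul n K (mmul n U (mmul n \<sigma> (adj U))))) \<ge> Re (mtrace n (mmul n K \<sigma>)))"

text \<open>Kronecker product of an (m x m) matrix A and an (n x n) matrix B, in the
  product basis |a,b> indexed by a * n + b.\<close>
definition kron :: "nat \<Rightarrow> cmat \<Rightarrow> nat \<Rightarrow> cmat \<Rightarrow> cmat" where
  "kron m A n B = (\<lambda>i j. A (i div n) (j div n) * B (i mod n) (j mod n))"

fun tpow :: "nat \<Rightarrow> cmat \<Rightarrow> nat \<Rightarrow> cmat" where
  "tpow d A 0 = mid"
| "tpow d A (Suc k) = kron (d ^ k) (tpow d A k) d A"

text \<open>The k-copy Hamiltonian sum_{i=1}^k H_i (dimension d^k).\<close>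
fun ham_sum :: "nat \<Rightarrow> cmat \<Rightarrow> nat \<Rightarrow> cmat" where
  "ham_sum d H 0 = mzero"
| "ham_sum d H (Suc k) = madd (kron (d ^ k) (ham_sum d H k) d mid) (kron (d ^ k) mid d H)"

definition k_passive :: "nat \<Rightarrow> cmat \<Rightarrow> cmat \<Rightarrow> nat \<Rightarrow> bool" where
  "k_passive d H \<rho> k \<longleftrightarrow> is_passive (d ^ k) (ham_sum d H k) (tpow d \<rho> k)"

definition commute :: "nat \<Rightarrow> cmat \<Rightarrow> cmat \<Rightarrow> bool" where
  "commute n A B \<longleftrightarrow> (\<forall>i<n. \<forall>j<n. mmul n A B i j = mmul n B A i j)"

definition Vk :: "nat \<Rightarrow> (nat \<Rightarrow> real) \<Rightarrow> (nat \<Rightarrow> real) \<Rightarrow> nat \<Rightarrow> (real \<times> real) set" where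
  "Vk d eps p k = {((\<Sum>i<d. real (c i) * eps i) / real k, (\<Sum>i<d. real (c i) * (- ln (p i))) / real k)
                   | c :: nat \<Rightarrow> nat. (\<Sum>i<d. c i) = k}"

definition le2 :: "real \<times> real \<Rightarrow> real \<times> real \<Rightarrow> bool" where
  "le2 x y \<longleftrightarrow> fst x \<le> fst y \<and> snd x \<le> snd y"

definition totally_ordered2 :: "(real \<times> real) set \<Rightarrow> bool" where
  "totally_ordered2 S \<longleftrightarrow> (\<forall>x\<in>S. \<forall>y\<in>S. le2 x y \<or> le2 y x)"

end

theory Submission
  imports Defs
begin

definition Dq :: "nat \<Rightarrow> (nat \<Rightarrow> nat \<Rightarrow> real) \<Rightarrow> (nat \<Rightarrow> real) \<Rightarrow> (nat \<Rightarrow> real) \<Rightarrow> real" where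
  "Dq n M E q = (\<Sum>a<n. \<Sum>b<n. M a b * E a * (q b - q a))"

lemma set_ineq:
  fixes M :: "nat \<Rightarrow> nat \<Rightarrow> real"
  assumes M0: "\<forall>a<n. \<forall>b<n. M a b \<ge> 0" and R: "\<forall>a<n. (\<Sum>b<n. M a b) = 1"
    and C: "\<forall>b<n. (\<Sum>a<n. M a b) = 1"
    and S: "S \<subseteq> {..<n}" and ord: "\<forall>a\<in>S. \<forall>a'\<in>{..<n}-S. E a \<le> E a'"
  shows "0 \<le> Dq n M E (\<lambda>b. if b \<in> S then 1 else 0)"
proof (cases "S = {}")
  case True then show ?thesis by (simp add: Dq_def)
next
  case False
  define s where "s = (\<lambda>b::nat. if b \<in> S then (1::real) else 0)"
  define w where "w = (\<lambda>a. \<Sum>b<n. M a b * s b)"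
  have finS: "finite S" using S finite_subset by blast
  define th where "th = Max (E ` S)"
  have "th \<in> E ` S" unfolding th_def using Max_in[of "E ` S"] finS False by auto
  then obtain a0 where a0: "a0 \<in> S" "E a0 = th" by auto
  have Ele: "E a \<le> th" if "a \<in> S" for a unfolding th_def using finS that by auto
  have Ege: "th \<le> E a" if "a < n" "a \<notin> S" for a using ord a0 that by auto
  have D1: "Dq n M E s = (\<Sum>a<n. E a * (w a - s a))"
  proof -
    have "Dq n M E s = (\<Sum>a<n. E a * (\<Sum>b<n. M a b * s b) - E a * s a * (\<Sum>b<n. M a b))"
      unfolding Dq_def sum_subtractf[symmetric] sum_distrib_left by (intro sum.cong) (simp_all add: algebra_simps)
    also have "\<dots> = (\<Sum>a<n. E a * (w a - s a))"
      by (rule sum.cong) (simp_all add: R w_def algebra_simps)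
    finally show ?thesis .
  qed
  have sw: "(\<Sum>a<n. w a) = (\<Sum>a<n. s a)"
  proof -
    have "(\<Sum>a<n. w a) = (\<Sum>b<n. (\<Sum>a<n. M a b) * s b)"
      unfolding w_def sum_distrib_right by (rule sum.swap)
    also have "\<dots> = (\<Sum>b<n. s b)" by (rule sum.cong) (simp_all add: C)
    finally show ?thesis .
  qed
  have "(\<Sum>a<n. E a * (w a - s a)) = (\<Sum>a<n. (E a - th) * (w a - s a))"
  proof -
    have "(\<Sum>a<n. (E a - th) * (w a - s a)) = (\<Sum>a<n. E a * (w a - s a)) - th * ((\<Sum>a<n. w a) - (\<Sum>a<n. s a))"
      by (simp add: algebra_simps sum_subtractf sum_distrib_left sum.distrib)
    then show ?thesis using sw by simp
  qed
  also have "\<dots> \<ge> 0"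
  proof (rule sum_nonneg)
    fix a assume a: "a \<in> {..<n}"
    have w0: "w a \<ge> 0" unfolding w_def s_def using M0 a by (auto intro!: sum_nonneg)
    have w1: "w a \<le> 1"
    proof -
      have "w a \<le> (\<Sum>b<n. M a b)" unfolding w_def s_def using M0 a by (auto intro!: sum_mono)
      then show ?thesis using R a by simp
    qed
    show "0 \<le> (E a - th) * (w a - s a)"
    proof (cases "a \<in> S")
      case True then show ?thesis using Ele[OF True] w1 by (simp add: s_def mult_nonpos_nonpos)
    next
      case False then show ?thesis using Ege[of a] a w0 by (simp add: s_def)
    qed
  qed
  finally show ?thesis using D1 s_def by simp
qed

lemma Dq_const:
  assumes "\<forall>a<n. \<forall>b<n. q a = q b"
  shows "Dq n M E q = 0"
proof -
  have "M a b * E a * (q b - q a) = 0" if "a < n" "b < n" for a b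
    using assms that by (metis diff_self mult_zero_right)
  then show ?thesis unfolding Dq_def by (simp add: sum.neutral)
qed

lemma Dq_ind:
  fixes M :: "nat \<Rightarrow> nat \<Rightarrow> real"
  assumes M0: "\<forall>a<n. \<forall>b<n. M a b \<ge> 0" and R: "\<forall>a<n. (\<Sum>b<n. M a b) = 1"
    and C: "\<forall>b<n. (\<Sum>a<n. M a b) = 1"
  shows "card (q ` {..<n}) \<le> N \<Longrightarrow> (\<forall>a<n. \<forall>b<n. E a < E b \<longrightarrow> q b \<le> q a) \<Longrightarrow> 0 \<le> Dq n M E q"
proof (induction N arbitrary: q)
  case 0
  then have "n = 0" by (simp add: lessThan_empty_iff)
  then show ?case by (simp add: Dq_def)
next
  case (Suc N)
  define T where "T = q ` {..<n}"
  have finT: "finite T" unfolding T_def by auto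
  show ?case
  proof (cases "card T \<le> 1")
    case True
    then have h: "\<forall>x\<in>T. \<forall>y\<in>T. x = y" using card_le_Suc0_iff_eq[OF finT] by simp
    have "\<forall>a<n. \<forall>b<n. q a = q b"
    proof (intro allI impI)
      fix a b assume "a < n" "b < n"
      then have "q a \<in> T" "q b \<in> T" unfolding T_def by auto
      then show "q a = q b" using h by blast
    qed
    then show ?thesis by (simp only: Dq_const order_refl)
  next
    case False
    define t where "t = Min T"
    define T' where "T' = T - {t}"
    have Tne: "T \<noteq> {}" using False by auto
    have tT: "t \<in> T" unfolding t_def using finT Tne by auto
    have cT': "card T' = card T - 1" unfolding T'_def using tT finT by auto
    then have T'ne: "T' \<noteq> {}" using False by auto
    have finT': "finite T'" unfolding T'_def using finT by auto
    define t' where "t' = Min T'"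
    have t'T': "t' \<in> T'" unfolding t'_def using finT' T'ne by auto
    have tlt: "t < t'" using t'T' finT unfolding T'_def t_def
      by (metis DiffD1 DiffD2 Min_le insertI1 order_le_neq_trans)
    have t'le: "t' \<le> v" if "v \<in> T" "v \<noteq> t" for v
      unfolding t'_def using finT' that T'_def by auto
    define q' where "q' = (\<lambda>b. max (q b) t')"
    define U where "U = {b. b < n \<and> t' \<le> q b}"
    define s where "s = (\<lambda>b. if b \<in> U then (1::real) else 0)"
    have qt: "q b = t" if "b < n" "b \<notin> U" for b
      using that t'le[of "q b"] unfolding U_def T_def by force
    have sub: "q' ` {..<n} \<subseteq> T'"
    proof
      fix v assume "v \<in> q' ` {..<n}"
      then obtain b where b: "b < n" "v = q' b" by auto
      show "v \<in> T'"
      proof (cases "b \<in> U")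
        case True
        then show ?thesis using b tlt unfolding q'_def U_def T'_def T_def by auto
      next
        case False
        then show ?thesis using b qt[of b] tlt t'T' unfolding q'_def by auto
      qed
    qed
    have "card (q' ` {..<n}) \<le> card T'" using card_mono[OF finT' sub] .
    then have c': "card (q' ` {..<n}) \<le> N" using cT' Suc.prems(1) unfolding T_def by simp
    have opp': "\<forall>a<n. \<forall>b<n. E a < E b \<longrightarrow> q' b \<le> q' a"
      using Suc.prems(2) unfolding q'_def by (meson max.mono order_refl)
    have IH: "0 \<le> Dq n M E q'" using Suc.IH[OF c' opp'] .
    have setc: "0 \<le> Dq n M E s" unfolding s_def
    proof (rule set_ineq[OF M0 R C])
      show "U \<subseteq> {..<n}" unfolding U_def by auto
      show "\<forall>a\<in>U. \<forall>a'\<in>{..<n} - U. E a \<le> E a'"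
      proof (intro ballI)
        fix a a' assume a: "a \<in> U" and a': "a' \<in> {..<n} - U"
        show "E a \<le> E a'"
        proof (rule ccontr)
          assume "\<not> E a \<le> E a'"
          then have "q a \<le> q a'" using Suc.prems(2) a a' unfolding U_def by auto
          moreover have "q a' = t" using qt a' by auto
          ultimately show False using a tlt unfolding U_def by auto
        qed
      qed
    qed
    have pt: "q b - q a = (q' b - q' a) + (t' - t) * (s b - s a)" if "a < n" "b < n" for a b
    proof -
      have "q x = q' x + (t' - t) * s x - (t' - t)" if "x < n" for x
      proof (cases "x \<in> U")
        case True then show ?thesis unfolding q'_def s_def U_def by auto
      next
        case False then show ?thesis using qt[OF that False] tlt unfolding q'_def s_def by auto
      qed
      note hx = this
      show ?thesis using hx[OF that(1)] hx[OF that(2)] by (simp add: algebra_simps)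
    qed
    have "Dq n M E q = Dq n M E q' + (t' - t) * Dq n M E s"
      unfolding Dq_def sum_distrib_left sum.distrib[symmetric]
      by (intro sum.cong refl) (simp add: pt algebra_simps)
    then show ?thesis using IH setc tlt by simp
  qed
qed

lemma rearr:
  fixes M :: "nat \<Rightarrow> nat \<Rightarrow> real"
  assumes M0: "\<forall>a<n. \<forall>b<n. M a b \<ge> 0" and R: "\<forall>a<n. (\<Sum>b<n. M a b) = 1"
    and C: "\<forall>b<n. (\<Sum>a<n. M a b) = 1"
    and opp: "\<forall>a<n. \<forall>b<n. E a < E b \<longrightarrow> q b \<le> q a"
  shows "(\<Sum>a<n. E a * q a) \<le> (\<Sum>a<n. E a * (\<Sum>b<n. M a b * q b))"
proof -
  have "0 \<le> Dq n M E q" using Dq_ind[OF M0 R C order_refl opp] .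
  also have "Dq n M E q = (\<Sum>a<n. E a * (\<Sum>b<n. M a b * q b)) - (\<Sum>a<n. E a * q a)"
  proof -
    have "Dq n M E q = (\<Sum>a<n. E a * (\<Sum>b<n. M a b * q b) - E a * q a * (\<Sum>b<n. M a b))"
      unfolding Dq_def sum_subtractf[symmetric] sum_distrib_left
      by (intro sum.cong) (simp_all add: algebra_simps)
    also have "\<dots> = (\<Sum>a<n. E a * (\<Sum>b<n. M a b * q b) - E a * q a)"
      by (rule sum.cong) (simp_all add: R)
    finally show ?thesis by (simp add: sum_subtractf)
  qed
  finally show ?thesis by simp
qed


lemma if_times1: "(if P then x else 0) * (y::complex) = (if P then x * y else 0)" by simp
lemma if_times2: "(y::complex) * (if P then x else 0) = (if P then y * x else 0)" by simp
lemma zcnj: "z * cnj z = (complex_of_real (cmod z))\<^sup>2"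
  using complex_norm_square[of z] by simp

lemma diag_mul_left: "a < n \<Longrightarrow> mmul n (diag_mat E) X a a = complex_of_real (E a) * X a a"
  unfolding mmul_def diag_mat_def by (simp add: if_times1)

lemma trace_form:
  "mtrace n (mmul n (diag_mat E) (mmul n U (mmul n (diag_mat q) (adj U))))
   = (\<Sum>a<n. complex_of_real (E a) * (\<Sum>b<n. U a b * complex_of_real (q b) * cnj (U a b)))"
proof -
  have "mmul n U (mmul n (diag_mat q) (adj U)) a a = (\<Sum>b<n. U a b * complex_of_real (q b) * cnj (U a b))" for a
    unfolding mmul_def diag_mat_def adj_def
    by (intro sum.cong refl) (simp add: if_times1 if_times2 sum_distrib_left)
  then show ?thesis unfolding mtrace_def by (intro sum.cong refl) (simp add: diag_mul_left)
qed

lemma trace_real: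
  "Re (mtrace n (mmul n (diag_mat E) (mmul n U (mmul n (diag_mat q) (adj U)))))
   = (\<Sum>a<n. E a * (\<Sum>b<n. (cmod (U a b))\<^sup>2 * q b))"
proof -
  have "U a b * complex_of_real (q b) * cnj (U a b) = complex_of_real ((cmod (U a b))\<^sup>2 * q b)" for a b
    by (simp add: zcnj mult_ac)
  note h = this
  show ?thesis unfolding trace_form h
    by (simp only: of_real_sum[symmetric] of_real_mult[symmetric] Re_complex_of_real)
qed

lemma trace_diag:
  "Re (mtrace n (mmul n (diag_mat E) (diag_mat q))) = (\<Sum>a<n. E a * q a)"
proof -
  have "mtrace n (mmul n (diag_mat E) (diag_mat q)) = (\<Sum>a<n. complex_of_real (E a * q a))"
    unfolding mtrace_def by (intro sum.cong refl) (simp add: diag_mul_left, simp add: diag_mat_def)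
  then show ?thesis by (simp only: of_real_sum[symmetric] Re_complex_of_real)
qed


lemma unitary_rows:
  assumes "unitary n U" "a < n"
  shows "(\<Sum>b<n. (cmod (U a b))\<^sup>2) = 1"
proof -
  have "mmul n U (adj U) a a = 1" using assms unfolding unitary_def mid_def by auto
  then have "(\<Sum>b<n. complex_of_real ((cmod (U a b))\<^sup>2)) = 1"
    unfolding mmul_def adj_def by (simp add: zcnj)
  then have "complex_of_real (\<Sum>b<n. (cmod (U a b))\<^sup>2) = 1" by (simp only: of_real_sum)
  then show ?thesis by (metis of_real_eq_1_iff)
qed

lemma unitary_cols:
  assumes "unitary n U" "b < n"
  shows "(\<Sum>a<n. (cmod (U a b))\<^sup>2) = 1"
proof -
  have "mmul n (adj U) U b b = 1" using assms unfolding unitary_def mid_def by auto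
  then have "(\<Sum>a<n. complex_of_real ((cmod (U a b))\<^sup>2)) = 1"
    unfolding mmul_def adj_def by (simp add: zcnj mult.commute)
  then have "complex_of_real (\<Sum>a<n. (cmod (U a b))\<^sup>2) = 1" by (simp only: of_real_sum)
  then show ?thesis by (metis of_real_eq_1_iff)
qed

definition swp :: "nat \<Rightarrow> nat \<Rightarrow> nat \<Rightarrow> nat" where
  "swp a b i = (if i = a then b else if i = b then a else i)"

definition swU :: "nat \<Rightarrow> nat \<Rightarrow> cmat" where
  "swU a b = (\<lambda>i j. if j = swp a b i then 1 else 0)"

lemma swp_inv[simp]: "swp a b (swp a b i) = i" unfolding swp_def by auto
lemma swp_inj: "(swp a b i = swp a b j) = (i = j)" by (metis swp_inv)
lemma swp_lt: "a < n \<Longrightarrow> b < n \<Longrightarrow> i < n \<Longrightarrow> swp a b i < n" unfolding swp_def by auto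

lemma swU_unitary:
  assumes "a < n" "b < n"
  shows "unitary n (swU a b)"
  unfolding unitary_def
proof (intro allI impI conjI)
  fix i j assume i: "i < n" and j: "j < n"
  have "mmul n (swU a b) (adj (swU a b)) i j = (\<Sum>l<n. if l = swp a b i then (if l = swp a b j then 1 else 0) else 0)"
    unfolding mmul_def swU_def adj_def by (intro sum.cong refl) auto
  also have "\<dots> = (if swp a b i = swp a b j then 1 else 0)"
    using swp_lt[OF assms i] by (simp add: sum.delta')
  also have "\<dots> = mid i j" unfolding mid_def swp_inj by simp
  finally show "mmul n (swU a b) (adj (swU a b)) i j = mid i j" .
  have "mmul n (adj (swU a b)) (swU a b) i j = (\<Sum>l<n. if l = swp a b i then (if l = swp a b j then 1 else 0) else 0)"
    unfolding mmul_def swU_def adj_def by (intro sum.cong refl) (auto, metis swp_inv)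
  also have "\<dots> = (if swp a b i = swp a b j then 1 else 0)"
    using swp_lt[OF assms i] by (simp add: sum.delta')
  also have "\<dots> = mid i j" unfolding mid_def swp_inj by simp
  finally show "mmul n (adj (swU a b)) (swU a b) i j = mid i j" .
qed

lemma passive_diag:
  "is_passive n (diag_mat E) (diag_mat q) \<longleftrightarrow> (\<forall>a<n. \<forall>b<n. E a < E b \<longrightarrow> q b \<le> q a)"
proof
  assume opp: "\<forall>a<n. \<forall>b<n. E a < E b \<longrightarrow> q b \<le> q a"
  show "is_passive n (diag_mat E) (diag_mat q)"
    unfolding is_passive_def trace_real trace_diag
  proof (intro allI impI)
    fix U assume U: "unitary n U"
    show "(\<Sum>a<n. E a * q a) \<le> (\<Sum>a<n. E a * (\<Sum>b<n. (cmod (U a b))\<^sup>2 * q b))"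
      by (rule rearr) (use opp unitary_rows[OF U] unitary_cols[OF U] in auto)
  qed
next
  assume P: "is_passive n (diag_mat E) (diag_mat q)"
  show "\<forall>a<n. \<forall>b<n. E a < E b \<longrightarrow> q b \<le> q a"
  proof (intro allI impI; rule ccontr)
    fix a b assume a: "a < n" and b: "b < n" and Eab: "E a < E b" and nq: "\<not> q b \<le> q a"
    have ab: "a \<noteq> b" using Eab by auto
    have "(\<Sum>x<n. E x * q x) \<le> (\<Sum>x<n. E x * (\<Sum>y<n. (cmod (swU a b x y))\<^sup>2 * q y))"
      using P swU_unitary[OF a b] unfolding is_passive_def trace_real trace_diag by blast
    also have "\<dots> = (\<Sum>x<n. E x * q (swp a b x))"
    proof (intro sum.cong refl)
      fix x assume x: "x \<in> {..<n}"
      have "(\<Sum>y<n. (cmod (swU a b x y))\<^sup>2 * q y) = (\<Sum>y<n. if y = swp a b x then q y else 0)"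
        unfolding swU_def by (intro sum.cong refl) auto
      also have "\<dots> = q (swp a b x)" using swp_lt[OF a b] x by (simp add: sum.delta')
      finally show "E x * (\<Sum>y<n. (cmod (swU a b x y))\<^sup>2 * q y) = E x * q (swp a b x)" by simp
    qed
    finally have le: "0 \<le> (\<Sum>x<n. E x * (q (swp a b x) - q x))"
      by (simp add: algebra_simps sum_subtractf)
    have "(\<Sum>x<n. E x * (q (swp a b x) - q x)) = (\<Sum>x\<in>{a,b}. E x * (q (swp a b x) - q x))"
      by (rule sum.mono_neutral_right) (auto simp: a b swp_def)
    also have "\<dots> = (E a - E b) * (q b - q a)" using ab by (simp add: swp_def algebra_simps)
    also have "\<dots> < 0" using Eab nq by (simp add: mult_neg_pos)
    finally show False using le by simp
  qed
qed


fun Qf :: "nat \<Rightarrow> (nat \<Rightarrow> real) \<Rightarrow> nat \<Rightarrow> nat \<Rightarrow> real" where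
  "Qf d p 0 i = 1"
| "Qf d p (Suc k) i = Qf d p k (i div d) * p (i mod d)"

fun Ef :: "nat \<Rightarrow> (nat \<Rightarrow> real) \<Rightarrow> nat \<Rightarrow> nat \<Rightarrow> real" where
  "Ef d e 0 i = 0"
| "Ef d e (Suc k) i = Ef d e k (i div d) + e (i mod d)"

lemma divmod_eq: "(i div n = j div n \<and> i mod n = j mod n) \<longleftrightarrow> i = (j::nat)"
  by (metis div_mult_mod_eq)

lemma kron_diag: "kron m (diag_mat f) n (diag_mat g) = diag_mat (\<lambda>i. f (i div n) * g (i mod n))"
proof (intro ext)
  fix i j
  show "kron m (diag_mat f) n (diag_mat g) i j = diag_mat (\<lambda>i. f (i div n) * g (i mod n)) i j"
    unfolding kron_def diag_mat_def using divmod_eq[of i n j] by auto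
qed

lemma mid_diag: "mid = diag_mat (\<lambda>_. 1)" unfolding mid_def diag_mat_def by (intro ext) auto
lemma mzero_diag: "mzero = diag_mat (\<lambda>_. 0)" unfolding mzero_def diag_mat_def by (intro ext) auto
lemma madd_diag: "madd (diag_mat f) (diag_mat g) = diag_mat (\<lambda>i. f i + g i)"
  unfolding madd_def diag_mat_def by (intro ext) auto

lemma tpow_diag: "tpow d (diag_mat p) k = diag_mat (Qf d p k)"
  by (induction k) (simp_all add: mid_diag kron_diag)

lemma ham_diag: "ham_sum d (diag_mat e) k = diag_mat (Ef d e k)"
  by (induction k) (simp_all add: mzero_diag kron_diag madd_diag mid_diag[symmetric],
                    simp add: mid_diag kron_diag madd_diag)

lemma diag_commute: "commute n (diag_mat f) (diag_mat g)"
  unfolding commute_def mmul_def diag_mat_def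
  by (auto intro!: sum.cong simp: if_times1 mult.commute)

lemma Qf_pos: "d \<ge> 1 \<Longrightarrow> \<forall>i<d. p i > 0 \<Longrightarrow> Qf d p k i > 0"
  by (induction k arbitrary: i) auto


lemma fwd:
  assumes d: "d \<ge> 1" and p: "\<forall>i<d. p i > 0"
  shows "i < d ^ k \<Longrightarrow> \<exists>c::nat\<Rightarrow>nat. (\<Sum>j<d. c j) = k \<and> Ef d eps k i = (\<Sum>j<d. real (c j) * eps j)
            \<and> - ln (Qf d p k i) = (\<Sum>j<d. real (c j) * (- ln (p j)))"
proof (induction k arbitrary: i)
  case 0
  show ?case by (rule exI[of _ "\<lambda>_. 0"]) simp
next
  case (Suc k)
  have "i < d ^ k * d" using Suc.prems by (simp add: mult.commute)
  then have "i div d < d ^ k" by (rule less_mult_imp_div_less)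
  then obtain c where c: "(\<Sum>j<d. c j) = k" "Ef d eps k (i div d) = (\<Sum>j<d. real (c j) * eps j)"
    "- ln (Qf d p k (i div d)) = (\<Sum>j<d. real (c j) * (- ln (p j)))" using Suc.IH by blast
  define j0 where "j0 = i mod d"
  have j0: "j0 < d" unfolding j0_def using d by simp
  define c' where "c' = (\<lambda>j. c j + (if j = j0 then 1 else 0))"
  have s1: "(\<Sum>j<d. c' j) = Suc k" unfolding c'_def using c(1) j0 by (simp add: sum.distrib)
  have s2: "(\<Sum>j<d. real (c' j) * f j) = (\<Sum>j<d. real (c j) * f j) + f j0" for f :: "nat \<Rightarrow> real"
  proof -
    have "(\<Sum>j<d. real (c' j) * f j) = (\<Sum>j<d. real (c j) * f j + (if j = j0 then f j else 0))"
      unfolding c'_def by (intro sum.cong refl) (simp add: algebra_simps)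
    also have "\<dots> = (\<Sum>j<d. real (c j) * f j) + f j0" using j0 by (simp add: sum.distrib)
    finally show ?thesis .
  qed
  have Qp: "Qf d p k (i div d) > 0" using Qf_pos[OF d p] .
  have pp: "p j0 > 0" using p j0 by simp
  show ?case
  proof (intro exI[of _ c'] conjI)
    show "(\<Sum>j<d. c' j) = Suc k" by (rule s1)
    show "Ef d eps (Suc k) i = (\<Sum>j<d. real (c' j) * eps j)" using c(2) s2[of eps] j0_def by simp
    show "- ln (Qf d p (Suc k) i) = (\<Sum>j<d. real (c' j) * - ln (p j))"
      using c(3) s2[of "\<lambda>j. - ln (p j)"] j0_def Qp pp by (simp add: ln_mult)
  qed
qed

lemma bwd:
  assumes d: "d \<ge> 1" and p: "\<forall>i<d. p i > 0"
  shows "(\<Sum>j<d. c j) = k \<Longrightarrow> \<exists>i<d^k. Ef d eps k i = (\<Sum>j<d. real (c j) * eps j)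
            \<and> - ln (Qf d p k i) = (\<Sum>j<d. real (c j) * (- ln (p j)))"
proof (induction k arbitrary: c)
  case 0
  then have "\<forall>j<d. c j = 0" by simp
  then show ?case by (intro exI[of _ 0]) simp
next
  case (Suc k)
  have "\<exists>j0<d. c j0 > 0"
  proof (rule ccontr)
    assume "\<not> ?thesis"
    then have "(\<Sum>j<d. c j) = 0" by simp
    then show False using Suc.prems by simp
  qed
  then obtain j0 where j0: "j0 < d" "c j0 > 0" by blast
  define c' where "c' = (\<lambda>j. c j - (if j = j0 then 1 else 0))"
  have cc: "c j = c' j + (if j = j0 then 1 else 0)" for j unfolding c'_def using j0 by auto
  have "(\<Sum>j<d. c j) = (\<Sum>j<d. c' j) + 1"
    unfolding cc[abs_def] using j0 by (simp add: sum.distrib)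
  then have "(\<Sum>j<d. c' j) = k" using Suc.prems by simp
  then obtain i' where i': "i' < d ^ k" "Ef d eps k i' = (\<Sum>j<d. real (c' j) * eps j)"
    "- ln (Qf d p k i') = (\<Sum>j<d. real (c' j) * (- ln (p j)))" using Suc.IH by blast
  have s2: "(\<Sum>j<d. real (c j) * f j) = (\<Sum>j<d. real (c' j) * f j) + f j0" for f :: "nat \<Rightarrow> real"
  proof -
    have "(\<Sum>j<d. real (c j) * f j) = (\<Sum>j<d. real (c' j) * f j + (if j = j0 then f j else 0))"
      by (intro sum.cong refl) (simp add: cc[of] algebra_simps)
    also have "\<dots> = (\<Sum>j<d. real (c' j) * f j) + f j0" using j0 by (simp add: sum.distrib)
    finally show ?thesis .
  qed
  define i where "i = i' * d + j0"
  have idiv: "i div d = i'" and imod: "i mod d = j0" unfolding i_def using j0 by auto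
  have ilt: "i < d ^ Suc k"
  proof -
    have "i < i' * d + d" unfolding i_def using j0 by simp
    also have "\<dots> = (i' + 1) * d" by simp
    also have "\<dots> \<le> d ^ k * d" using i'(1) by (intro mult_right_mono) auto
    finally show ?thesis by (simp add: mult.commute)
  qed
  have Qp: "Qf d p k i' > 0" using Qf_pos[OF d p] .
  have pp: "p j0 > 0" using p j0 by simp
  show ?case
  proof (intro exI[of _ i] conjI ilt)
    show "Ef d eps (Suc k) i = (\<Sum>j<d. real (c j) * eps j)" using i'(2) s2[of eps] idiv imod by simp
    show "- ln (Qf d p (Suc k) i) = (\<Sum>j<d. real (c j) * - ln (p j))"
      using i'(3) s2[of "\<lambda>j. - ln (p j)"] idiv imod Qp pp by (simp add: ln_mult)
  qed
qed

lemma Vk_eq: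
  assumes d: "d \<ge> 1" and p: "\<forall>i<d. p i > 0"
  shows "Vk d eps p k = (\<lambda>i. (Ef d eps k i / real k, - ln (Qf d p k i) / real k)) ` {..<d^k}"
proof
  show "Vk d eps p k \<subseteq> (\<lambda>i. (Ef d eps k i / real k, - ln (Qf d p k i) / real k)) ` {..<d^k}"
  proof
    fix v assume "v \<in> Vk d eps p k"
    then obtain c where c: "(\<Sum>j<d. c j) = k"
      "v = ((\<Sum>i<d. real (c i) * eps i) / real k, (\<Sum>i<d. real (c i) * (- ln (p i))) / real k)"
      unfolding Vk_def by blast
    obtain i where "i < d^k" "Ef d eps k i = (\<Sum>j<d. real (c j) * eps j)"
            "- ln (Qf d p k i) = (\<Sum>j<d. real (c j) * (- ln (p j)))" using bwd[OF d p c(1)] by blast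
    then show "v \<in> (\<lambda>i. (Ef d eps k i / real k, - ln (Qf d p k i) / real k)) ` {..<d^k}"
      using c(2) by (intro image_eqI[of _ _ i]) auto
  qed
next
  show "(\<lambda>i. (Ef d eps k i / real k, - ln (Qf d p k i) / real k)) ` {..<d^k} \<subseteq> Vk d eps p k"
  proof
    fix v assume "v \<in> (\<lambda>i. (Ef d eps k i / real k, - ln (Qf d p k i) / real k)) ` {..<d^k}"
    then obtain i where i: "i < d^k" "v = (Ef d eps k i / real k, - ln (Qf d p k i) / real k)" by auto
    obtain c where "(\<Sum>j<d. c j) = k" "Ef d eps k i = (\<Sum>j<d. real (c j) * eps j)"
            "- ln (Qf d p k i) = (\<Sum>j<d. real (c j) * (- ln (p j)))" using fwd[OF d p i(1)] by blast
    then show "v \<in> Vk d eps p k" unfolding Vk_def using i(2) by auto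
  qed
qed

theorem lemma2:
  fixes d k :: nat and eps p :: "nat \<Rightarrow> real"
  assumes "d \<ge> 1" and "k \<ge> 1"
    and "\<forall>i<d. p i > 0" and "(\<Sum>i<d. p i) = 1"
  shows "k_passive d (diag_mat eps) (diag_mat p) k \<longleftrightarrow>
           commute d (diag_mat p) (diag_mat eps) \<and> totally_ordered2 (Vk d eps p k)"
proof -
  define n where "n = d ^ k"
  define E where "E = Ef d eps k"
  define Q where "Q = Qf d p k"
  have Qp: "Q i > 0" for i unfolding Q_def using Qf_pos assms(1,3) by blast
  have kp: "real k > 0" using assms(2) by simp
  have KP: "k_passive d (diag_mat eps) (diag_mat p) k \<longleftrightarrow> (\<forall>a<n. \<forall>b<n. E a < E b \<longrightarrow> Q b \<le> Q a)"
    unfolding k_passive_def tpow_diag ham_diag passive_diag n_def E_def Q_def ..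
  have TO: "totally_ordered2 (Vk d eps p k) \<longleftrightarrow>
     (\<forall>a<n. \<forall>b<n. le2 (E a / real k, - ln (Q a) / real k) (E b / real k, - ln (Q b) / real k)
               \<or> le2 (E b / real k, - ln (Q b) / real k) (E a / real k, - ln (Q a) / real k))"
    unfolding Vk_eq[OF assms(1,3)] totally_ordered2_def n_def E_def Q_def by auto
  have lnle: "- ln (Q a) / real k \<le> - ln (Q b) / real k \<longleftrightarrow> Q b \<le> Q a" for a b
    using Qp[of a] Qp[of b] kp by (simp add: divide_right_mono_neg divide_le_cancel)
  have Ele: "E a / real k \<le> E b / real k \<longleftrightarrow> E a \<le> E b" for a b
    using kp by (simp add: divide_le_cancel)
  have "(\<forall>a<n. \<forall>b<n. E a < E b \<longrightarrow> Q b \<le> Q a) \<longleftrightarrow> totally_ordered2 (Vk d eps p k)"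
    unfolding TO le2_def fst_conv snd_conv lnle Ele
  proof (intro iffI allI impI)
    fix a b assume H: "\<forall>a<n. \<forall>b<n. E a < E b \<longrightarrow> Q b \<le> Q a" and a: "a < n" and b: "b < n"
    show "E a \<le> E b \<and> Q b \<le> Q a \<or> E b \<le> E a \<and> Q a \<le> Q b"
    proof (cases "E a < E b")
      case True then show ?thesis using H a b by auto
    next
      case False
      show ?thesis
      proof (cases "E b < E a")
        case True then show ?thesis using H a b by auto
      next
        case False2: False
        then have "E a = E b" using False by simp
        then show ?thesis by (cases "Q a \<le> Q b") auto
      qed
    qed
  next
    fix a b assume H: "\<forall>a<n. \<forall>b<n. E a \<le> E b \<and> Q b \<le> Q a \<or> E b \<le> E a \<and> Q a \<le> Q b"
      and a: "a < n" and b: "b < n" and lt: "E a < E b"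
    then show "Q b \<le> Q a" by force
  qed
  then show ?thesis using KP diag_commute by simp
qed

end
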